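(* Let $p^*\in(0,1)$ be the solution of $p^{(2-p)/(1-p)}=(1-p)^2$ and $\tau^*=(p^* )^{1/(1-p^* )}$. Let $\varepsilon\in[0,1)$ and $p=(1-\varepsilon)p^*$. Then for every integer $\ell\ge0$, \[ \int_{\tau^*}^1\frac{(1-(1-\varepsilon)t)^\ell}{t^{p^*}}\,dt\ \ge\ (1-p)^\ell . \] *)

theory Defs
  imports "HOL-Analysis.Analysis"
begin

end

theory Submission
  imports Defs
begin

lemma tangent_pow:
  fixes x c :: real
  assumes "x \<ge> 0" "c \<ge> 0"
  shows "x ^ Suc n \<ge> c ^ Suc n + real (Suc n) * c ^ n * (x - c)"
proof (induction n)
  case 0
  then show ?case by simp
next
  case (Suc n)
  have "x ^ Suc (Suc n) = x * x ^ Suc n" by simp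
  also have "\<dots> \<ge> x * (c ^ Suc n + real (Suc n) * c ^ n * (x - c))"
    using Suc assms(1) by (simp add: mult_left_mono)
  finally have h: "x ^ Suc (Suc n) \<ge> x * (c ^ Suc n + real (Suc n) * c ^ n * (x - c))" .
  have "x * (c ^ Suc n + real (Suc n) * c ^ n * (x - c)) -
        (c ^ Suc (Suc n) + real (Suc (Suc n)) * c ^ Suc n * (x - c))
        = real (Suc n) * c ^ n * (x - c)^2"
    by (simp add: algebra_simps power2_eq_square)
  moreover have "real (Suc n) * c ^ n * (x - c)^2 \<ge> 0" using assms by simp
  ultimately show ?case using h by linarith
qed

lemma tangent_pow':
  fixes x c :: real
  assumes "x \<ge> 0" "c \<ge> 0"
  shows "x ^ l \<ge> c ^ l + real l * c ^ (l - 1) * (x - c)"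
  using tangent_pow[OF assms, of "l - 1"] by (cases l) auto

theorem mainTheorem12:
  fixes ps eps :: real and l :: nat
  assumes "0 < ps" and "ps < 1"
    and "ps powr ((2 - ps) / (1 - ps)) = (1 - ps)^2"
    and "0 \<le> eps" and "eps < 1"
  shows "integral {ps powr (1 / (1 - ps))..1} (\<lambda>t. (1 - (1 - eps) * t)^l / t powr ps)
           \<ge> (1 - (1 - eps) * ps)^l"
proof -
  define \<tau> where "\<tau> = ps powr (1 / (1 - ps))"
  define a where "a = 1 - eps"
  define c where "c = 1 - a * ps"
  have tpos: "\<tau> > 0" unfolding \<tau>_def using assms by simp
  have tle: "\<tau> \<le> 1" unfolding \<tau>_def using assms
    by (intro powr_le1) auto
  have t1: "\<tau> powr (1 - ps) = ps" unfolding \<tau>_def using assms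
    by (simp add: powr_powr)
  have t2: "\<tau> powr (2 - ps) = (1 - ps)^2" unfolding \<tau>_def using assms
    by (simp add: powr_powr)
  have a01: "0 < a" "a \<le> 1" unfolding a_def using assms by auto
  have aps: "a * ps \<le> 1 * ps" using mult_right_mono[OF a01(2), of ps] assms by simp
  have cpos: "c > 0" unfolding c_def using aps assms by linarith
  have I0: "((\<lambda>t. 1 / t powr ps) has_integral 1) {\<tau>..1}"
  proof -
    have "((\<lambda>t. 1 / t powr ps) has_integral
           (1 powr (1 - ps) / (1 - ps) - \<tau> powr (1 - ps) / (1 - ps))) {\<tau>..1}"
    proof (rule fundamental_theorem_of_calculus[OF tle])
      fix x assume x: "x \<in> {\<tau>..1}"
      hence xp: "x > 0" using tpos by auto
      have "((\<lambda>t. t powr (1 - ps) / (1 - ps)) has_real_derivative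
              (1 - ps) * x powr (1 - ps - 1) / (1 - ps)) (at x)"
        by (intro DERIV_cdivide has_real_derivative_powr xp)
      moreover have "(1 - ps) * x powr (1 - ps - 1) / (1 - ps) = 1 / x powr ps"
        using assms xp by (simp add: powr_minus_divide)
      ultimately show "((\<lambda>t. t powr (1 - ps) / (1 - ps)) has_vector_derivative 1 / x powr ps)
             (at x within {\<tau>..1})"
        by (simp add: has_real_derivative_iff_has_vector_derivative[symmetric]
            has_field_derivative_at_within)
    qed
    moreover have "1 powr (1 - ps) / (1 - ps) - \<tau> powr (1 - ps) / (1 - ps) = 1"
      using assms t1 by (simp add: field_simps)
    ultimately show ?thesis by simp
  qed
  have I1: "((\<lambda>t. t / t powr ps) has_integral ps) {\<tau>..1}"
  proof -
    have "((\<lambda>t. t / t powr ps) has_integral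
           (1 powr (2 - ps) / (2 - ps) - \<tau> powr (2 - ps) / (2 - ps))) {\<tau>..1}"
    proof (rule fundamental_theorem_of_calculus[OF tle])
      fix x assume x: "x \<in> {\<tau>..1}"
      hence xp: "x > 0" using tpos by auto
      have "((\<lambda>t. t powr (2 - ps) / (2 - ps)) has_real_derivative
              (2 - ps) * x powr (2 - ps - 1) / (2 - ps)) (at x)"
        by (intro DERIV_cdivide has_real_derivative_powr xp)
      moreover have "(2 - ps) * x powr (2 - ps - 1) / (2 - ps) = x / x powr ps"
      proof -
        have "x powr (2 - ps - 1) = x powr 1 / x powr ps"
          using xp by (simp add: powr_diff del: powr_one_gt_zero_iff)
        also have "x powr 1 = x" using xp by simp
        finally have "x powr (2 - ps - 1) = x / x powr ps" .
        thus ?thesis using assms by simp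
      qed
      ultimately show "((\<lambda>t. t powr (2 - ps) / (2 - ps)) has_vector_derivative x / x powr ps)
             (at x within {\<tau>..1})"
        by (simp add: has_real_derivative_iff_has_vector_derivative[symmetric]
            has_field_derivative_at_within)
    qed
    moreover have "1 powr (2 - ps) / (2 - ps) - \<tau> powr (2 - ps) / (2 - ps) = ps"
      using assms t2 by (simp add: field_simps power2_eq_square)
    ultimately show ?thesis by simp
  qed
  define A where "A = c ^ l + real l * c ^ (l - 1) * a * ps"
  define B where "B = real l * c ^ (l - 1) * a"
  have I2: "((\<lambda>t. A * (1 / t powr ps) - B * (t / t powr ps)) has_integral (A * 1 - B * ps)) {\<tau>..1}"
    by (intro has_integral_diff has_integral_mult_right I0 I1)
  have eq: "A * 1 - B * ps = c ^ l" unfolding A_def B_def by simp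
  have int: "(\<lambda>t. (1 - a * t)^l / t powr ps) integrable_on {\<tau>..1}"
    by (intro integrable_continuous_interval continuous_intros) (use tpos in auto)
  have "integral {\<tau>..1} (\<lambda>t. A * (1 / t powr ps) - B * (t / t powr ps))
        \<le> integral {\<tau>..1} (\<lambda>t. (1 - a * t)^l / t powr ps)"
  proof (rule integral_le)
    show "(\<lambda>t. A * (1 / t powr ps) - B * (t / t powr ps)) integrable_on {\<tau>..1}"
      using I2 by blast
    show "(\<lambda>t. (1 - a * t)^l / t powr ps) integrable_on {\<tau>..1}" by (rule int)
    fix t assume t: "t \<in> {\<tau>..1}"
    hence tp: "t > 0" "t \<le> 1" using tpos by auto
    have x0: "1 - a * t \<ge> 0" proof -
      have "a * t \<le> 1 * 1" using mult_mono[OF a01(2) tp(2)] tp a01 by simp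
      thus ?thesis by simp
    qed
    have "(1 - a * t)^l \<ge> c ^ l + real l * c ^ (l - 1) * ((1 - a * t) - c)"
      by (rule tangent_pow'[OF x0]) (use cpos in simp)
    also have "c ^ l + real l * c ^ (l - 1) * ((1 - a * t) - c) = A - B * t"
      unfolding A_def B_def c_def by (simp add: algebra_simps)
    finally have "A - B * t \<le> (1 - a * t)^l" .
    moreover have "A * (1 / t powr ps) - B * (t / t powr ps) = (A - B * t) / t powr ps"
      by (simp add: diff_divide_distrib)
    moreover have "t powr ps > 0" using tp by simp
    ultimately show "A * (1 / t powr ps) - B * (t / t powr ps) \<le> (1 - a * t)^l / t powr ps"
      by (simp add: divide_right_mono)
  qed
  moreover have "integral {\<tau>..1} (\<lambda>t. A * (1 / t powr ps) - B * (t / t powr ps)) = c ^ l"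
    using I2 eq by (simp add: integral_unique)
  ultimately show ?thesis unfolding \<tau>_def a_def c_def by simp
qed

end
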